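(* Let $n\ge1$, $L,G>0$ and $\eta>0$ with $\eta nL\le \frac12$. Let $a_1,\dots,a_n\in[0,L]$ and $b_1,\dots,b_n\in[-G,G]$ with $\sum_{i=1}^nb_i=0$. For a permutation $\sigma$ of $\{1,\dots,n\}$ define \[ X_\sigma=\sum_{j=1}^n\left(\prod_{i=j+1}^n(1-\eta a_{\sigma(i)})\right)b_{\sigma(j)} \] (an empty product equals $1$). If $\sigma$ is a uniformly random permutation, then \[ \big|\mathbb{E}_\sigma[X_\sigma]\big|\;\le\;2\eta nGL. \] *)

theory Defs
  imports "HOL-Analysis.Analysis" "HOL-Combinatorics.Permutations"
begin

definition X_perm :: "nat \<Rightarrow> real \<Rightarrow> (nat \<Rightarrow> real) \<Rightarrow> (nat \<Rightarrow> real) \<Rightarrow> (nat \<Rightarrow> nat) \<Rightarrow> real" where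
  "X_perm n \<eta> a b \<sigma> =
     (\<Sum>j=1..n. (\<Prod>i=j+1..n. (1 - \<eta> * a (\<sigma> i))) * b (\<sigma> j))"

definition expect_perm :: "nat \<Rightarrow> ((nat \<Rightarrow> nat) \<Rightarrow> real) \<Rightarrow> real" where
  "expect_perm n F = (\<Sum>\<sigma>\<in>{\<sigma>. \<sigma> permutes {1..n}}. F \<sigma>) / real (card {\<sigma>. \<sigma> permutes {1..n}})"

end

theory Submission
  imports Defs
begin

lemma prod_diff_le:
  fixes x y :: "nat \<Rightarrow> real"
  assumes "finite I" "\<And>i. i\<in>I \<Longrightarrow> 0 \<le> x i \<and> x i \<le> 1" "\<And>i. i\<in>I \<Longrightarrow> 0 \<le> y i \<and> y i \<le> 1"
  shows "\<bar>(\<Prod>i\<in>I. x i) - (\<Prod>i\<in>I. y i)\<bar> \<le> (\<Sum>i\<in>I. \<bar>x i - y i\<bar>)"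
  using assms
proof (induction I rule: finite_induct)
  case empty thus ?case by simp
next
  case (insert k I)
  let ?X = "\<Prod>i\<in>I. x i" and ?Y = "\<Prod>i\<in>I. y i"
  have Y: "0 \<le> ?Y" "?Y \<le> 1" using insert.prems by (auto intro!: prod_nonneg prod_le_1)
  have xk: "0 \<le> x k" "x k \<le> 1" using insert.prems by auto
  have IH: "\<bar>?X - ?Y\<bar> \<le> (\<Sum>i\<in>I. \<bar>x i - y i\<bar>)" using insert by auto
  have "x k * ?X - y k * ?Y = x k * (?X - ?Y) + (x k - y k) * ?Y" by algebra
  hence "\<bar>x k * ?X - y k * ?Y\<bar> \<le> \<bar>x k\<bar> * \<bar>?X - ?Y\<bar> + \<bar>x k - y k\<bar> * \<bar>?Y\<bar>"
    by (metis abs_mult abs_triangle_ineq)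
  also have "\<dots> \<le> \<bar>?X - ?Y\<bar> + \<bar>x k - y k\<bar>"
  proof -
    have "\<bar>x k\<bar> * \<bar>?X - ?Y\<bar> \<le> \<bar>?X - ?Y\<bar>" using xk by (simp add: mult_left_le_one_le)
    moreover have "\<bar>x k - y k\<bar> * \<bar>?Y\<bar> \<le> \<bar>x k - y k\<bar>" using Y by (simp add: mult_left_le)
    ultimately show ?thesis by linarith
  qed
  also have "\<dots> \<le> (\<Sum>i\<in>I. \<bar>x i - y i\<bar>) + \<bar>x k - y k\<bar>" using IH by linarith
  finally show ?case using insert.hyps by (simp add: add.commute)
qed

theorem lemma8:
  fixes n :: nat and L G \<eta> :: real and a b :: "nat \<Rightarrow> real"
  assumes "n \<ge> 1" and "L > 0" and "G > 0" and "\<eta> > 0"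
    and "\<eta> * real n * L \<le> 1/2"
    and "\<And>i. i \<in> {1..n} \<Longrightarrow> 0 \<le> a i \<and> a i \<le> L"
    and "\<And>i. i \<in> {1..n} \<Longrightarrow> -G \<le> b i \<and> b i \<le> G"
    and "(\<Sum>i=1..n. b i) = 0"
  shows "\<bar>expect_perm n (X_perm n \<eta> a b)\<bar> \<le> 2 * \<eta> * real n * G * L"
proof -
  define S where "S = {1..n}"
  define P where "P = {\<sigma>. \<sigma> permutes S}"
  define c where "c = (\<lambda>i. 1 - \<eta> * a i)"
  define F where "F = (\<lambda>\<sigma> j. \<Prod>i=j+1..n. c (\<sigma> i))"
  define W where "W = (\<lambda>q. \<Sum>\<sigma>\<in>P. F \<sigma> (inv \<sigma> q))"
  have finS: "finite S" by (simp add: S_def)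
  have finP: "finite P" by (simp add: P_def finite_permutations[OF finS])
  have cardP: "card P > 0" using card_permutations[OF refl finS] by (simp add: P_def)
  have 1: "1 \<in> S" using assms(1) by (simp add: S_def)
  have etaL: "\<eta> * L \<le> 1/2"
  proof -
    have "\<eta> * L * 1 \<le> \<eta> * L * real n" using assms(1,2,4) by (intro mult_left_mono) auto
    thus ?thesis using assms(5) by (simp add: mult_ac)
  qed
  have cb: "0 \<le> c i \<and> c i \<le> 1" if "i \<in> S" for i
  proof -
    have "0 \<le> a i" "a i \<le> L" using assms(6) that by (auto simp: S_def)
    hence "\<eta> * a i \<le> \<eta> * L" "0 \<le> \<eta> * a i" using assms(4) by (auto intro: mult_left_mono)
    thus ?thesis using etaL by (simp add: c_def)
  qed
  have X_eq: "X_perm n \<eta> a b \<sigma> = (\<Sum>q\<in>S. F \<sigma> (inv \<sigma> q) * b q)" if "\<sigma> \<in> P" for \<sigma>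
  proof -
    have sp: "\<sigma> permutes S" using that by (simp add: P_def)
    have "(\<Sum>j\<in>S. F \<sigma> j * b (\<sigma> j)) = (\<Sum>q\<in>S. F \<sigma> (inv \<sigma> q) * b q)"
      using sum.permutes_inv[OF sp, of "\<lambda>u s. F \<sigma> s * b u"] by simp
    thus ?thesis unfolding X_perm_def F_def c_def S_def by simp
  qed
  have sumX: "(\<Sum>\<sigma>\<in>P. X_perm n \<eta> a b \<sigma>) = (\<Sum>q\<in>S. b q * W q)"
  proof -
    have "(\<Sum>\<sigma>\<in>P. X_perm n \<eta> a b \<sigma>) = (\<Sum>\<sigma>\<in>P. \<Sum>q\<in>S. F \<sigma> (inv \<sigma> q) * b q)"
      using X_eq by simp
    also have "\<dots> = (\<Sum>q\<in>S. \<Sum>\<sigma>\<in>P. F \<sigma> (inv \<sigma> q) * b q)" by (rule sum.swap)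
    also have "\<dots> = (\<Sum>q\<in>S. b q * W q)" by (simp add: W_def sum_distrib_left mult.commute)
    finally show ?thesis .
  qed
  also have "\<dots> = (\<Sum>q\<in>S. b q * (W q - W 1))"
  proof -
    have "(\<Sum>q\<in>S. b q * W 1) = 0" using assms(8) by (simp add: S_def sum_distrib_right[symmetric])
    thus ?thesis by (simp add: right_diff_distrib sum_subtractf)
  qed
  finally have sumX2: "(\<Sum>\<sigma>\<in>P. X_perm n \<eta> a b \<sigma>) = (\<Sum>q\<in>S. b q * (W q - W 1))" .
  have Wdiff: "\<bar>W q - W 1\<bar> \<le> real (card P) * (\<eta> * L)" if q: "q \<in> S" for q
  proof -
    define \<tau> where "\<tau> = Transposition.transpose q 1"
    have \<tau>p: "\<tau> permutes S" using q 1 by (simp add: \<tau>_def permutes_swap_id)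
    have \<tau>\<tau>: "\<tau> (\<tau> x) = x" for x by (simp add: \<tau>_def)
    have \<tau>\<tau>o: "\<tau> \<circ> (\<tau> \<circ> s) = s" for s :: "nat \<Rightarrow> nat" by (simp add: fun_eq_iff \<tau>\<tau>)
    have "W 1 = (\<Sum>\<sigma>\<in>P. F (\<tau> \<circ> \<sigma>) (inv (\<tau> \<circ> \<sigma>) 1))"
      unfolding W_def
      by (rule sum.reindex_bij_witness[of _ "\<lambda>\<sigma>. \<tau> \<circ> \<sigma>" "\<lambda>\<sigma>. \<tau> \<circ> \<sigma>"])
         (auto simp: P_def \<tau>\<tau> \<tau>\<tau>o intro: permutes_compose[OF _ \<tau>p])
    hence "W q - W 1 = (\<Sum>\<sigma>\<in>P. F \<sigma> (inv \<sigma> q) - F (\<tau> \<circ> \<sigma>) (inv (\<tau> \<circ> \<sigma>) 1))"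
      by (simp add: W_def sum_subtractf)
    hence "\<bar>W q - W 1\<bar> \<le> (\<Sum>\<sigma>\<in>P. \<bar>F \<sigma> (inv \<sigma> q) - F (\<tau> \<circ> \<sigma>) (inv (\<tau> \<circ> \<sigma>) 1)\<bar>)"
      by (simp add: sum_abs)
    also have "\<dots> \<le> (\<Sum>\<sigma>\<in>P. \<eta> * L)"
    proof (rule sum_mono)
      fix \<sigma> assume "\<sigma> \<in> P"
      hence sp: "\<sigma> permutes S" by (simp add: P_def)
      define j where "j = inv \<sigma> q"
      have sj: "\<sigma> j = q" by (simp add: j_def permutes_inverses(1)[OF sp])
      have "inv (\<tau> \<circ> \<sigma>) 1 = j"
        using permutes_inv_eq[OF permutes_compose[OF sp \<tau>p]] sj by (simp add: \<tau>_def)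
      hence eqF: "F (\<tau> \<circ> \<sigma>) (inv (\<tau> \<circ> \<sigma>) 1) = (\<Prod>i=j+1..n. c (\<tau> (\<sigma> i)))"
        by (simp add: F_def)
      have inS: "\<sigma> i \<in> S" "\<tau> (\<sigma> i) \<in> S" if "i \<in> {j+1..n}" for i
        using that permutes_in_image[OF sp] permutes_in_image[OF \<tau>p] by (auto simp: S_def)
      have "\<bar>F \<sigma> j - (\<Prod>i=j+1..n. c (\<tau> (\<sigma> i)))\<bar> \<le> (\<Sum>i\<in>{j+1..n}. \<bar>c (\<sigma> i) - c (\<tau> (\<sigma> i))\<bar>)"
        unfolding F_def by (rule prod_diff_le) (simp, use cb inS in blast, use cb inS in blast)
      also have "\<dots> \<le> (\<Sum>i\<in>{j+1..n}. if i = inv \<sigma> 1 then \<eta> * L else 0)"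
      proof (rule sum_mono)
        fix i assume i: "i \<in> {j+1..n}"
        show "\<bar>c (\<sigma> i) - c (\<tau> (\<sigma> i))\<bar> \<le> (if i = inv \<sigma> 1 then \<eta> * L else 0)"
        proof (cases "\<sigma> i = 1")
          case True
          hence "i = inv \<sigma> 1" using permutes_inv_eq[OF sp] by metis
          moreover have "\<tau> (\<sigma> i) = q" using True by (simp add: \<tau>_def)
          moreover have "\<bar>a 1 - a q\<bar> \<le> L" using assms(6)[of 1] assms(6)[of q] 1 q unfolding S_def by (simp add: abs_le_iff)
          moreover have "\<bar>c 1 - c q\<bar> = \<eta> * \<bar>a 1 - a q\<bar>"
          proof -
            have "c 1 - c q = \<eta> * (a q - a 1)" by (simp add: c_def algebra_simps)
            thus ?thesis using assms(4) by (simp add: abs_mult abs_minus_commute)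
          qed
          ultimately show ?thesis using True assms(4) by (simp add: mult_left_mono)
        next
          case False
          have "\<sigma> i \<noteq> q"
          proof
            assume "\<sigma> i = q"
            hence "i = j" using permutes_inv_eq[OF sp] j_def by metis
            thus False using i by simp
          qed
          hence "\<tau> (\<sigma> i) = \<sigma> i" using False by (simp add: \<tau>_def)
          moreover have "i \<noteq> inv \<sigma> 1" using False permutes_inverses(1)[OF sp] by metis
          ultimately show ?thesis by simp
        qed
      qed
      also have "\<dots> \<le> \<eta> * L" using assms(2,4) by (simp add: sum.delta)
      finally show "\<bar>F \<sigma> (inv \<sigma> q) - F (\<tau> \<circ> \<sigma>) (inv (\<tau> \<circ> \<sigma>) 1)\<bar> \<le> \<eta> * L"
        using eqF by (simp add: j_def)
    qed
    also have "\<dots> = real (card P) * (\<eta> * L)" by simp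
    finally show ?thesis .
  qed
  have "\<bar>\<Sum>\<sigma>\<in>P. X_perm n \<eta> a b \<sigma>\<bar> \<le> (\<Sum>q\<in>S. G * (real (card P) * (\<eta> * L)))"
    unfolding sumX2
  proof (rule order_trans[OF sum_abs], rule sum_mono)
    fix q assume q: "q \<in> S"
    have "\<bar>b q\<bar> \<le> G" using assms(7)[of q] q unfolding S_def by (simp add: abs_le_iff)
    thus "\<bar>b q * (W q - W 1)\<bar> \<le> G * (real (card P) * (\<eta> * L))"
      using Wdiff[OF q] by (simp add: abs_mult mult_mono)
  qed
  also have "\<dots> = real (card P) * (\<eta> * real n * G * L)" by (simp add: S_def mult_ac)
  finally have bound: "\<bar>\<Sum>\<sigma>\<in>P. X_perm n \<eta> a b \<sigma>\<bar> \<le> real (card P) * (\<eta> * real n * G * L)" .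
  have "\<bar>expect_perm n (X_perm n \<eta> a b)\<bar> = \<bar>\<Sum>\<sigma>\<in>P. X_perm n \<eta> a b \<sigma>\<bar> / real (card P)"
    by (simp add: expect_perm_def P_def S_def)
  also have "\<dots> \<le> \<eta> * real n * G * L" using bound cardP by (simp add: divide_le_eq mult.commute)
  also have "\<dots> \<le> 2 * \<eta> * real n * G * L" using assms(2,3,4) by simp
  finally show ?thesis .
qed

end
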